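(* Let $C$ be a bivariate SI copula and $(U,V)$ a random vector with distribution function $C$. For $p\in[0,1]$ define $T_p:[0,1]\to[0,1]$ by $T_p(u)=u$ if $0\le u\le 1-p$ and $T_p(u)=1-(u-(1-p))$ if $1-p<u\le1$, and let $C_p$ be the distribution function of $(T_p(U),V)$. Then $C_p$ is a copula for every $p\in[0,1]$, and (i) $C_0=C=C^\uparrow$ and $C_1=C^\downarrow$; (ii) $C_p=_{\partial_1S}C$ for all $p\in[0,1]$; (iii) $C_p(u,v)\ge C_{p'}(u,v)$ for all $(u,v)\in[0,1]^2$ whenever $0\le p\le p'\le1$; (iv) $p\mapsto C_p$ is continuous with respect to pointwise convergence.
   Context: A bivariate copula is a function $C:[0,1]^2\to[0,1]$ that is grounded, has uniform margins and is 2-increasing. A copula is SI (resp. SD) if it is concave (resp. convex) in its first argument (equivalently, $P(V\ge v\mid U=u)$ is increasing, resp. decreasing, in $u$ a.e. for each $v$). For measurable $f,g:[0,1]\to[0,1]$, $f\prec_S g$ means $\int_0^x f^*\le\int_0^x g^*$ for all $x\in(0,1)$ and $\int_0^1 f=\int_0^1 g$, where $h^*$ is the decreasing rearrangement of $h$. For copulas $D,E$: $D\le_{\partial_1S}E$ if $\partial_1D(\cdot,v)\prec_S\partial_1E(\cdot,v)$ for all $v$ ($\partial_1$ = partial derivative in first argument), and $D=_{\partial_1S}E$ if both directions hold. For each copula $C$, $C^\uparrow$ (resp. $C^\downarrow$) denotes the unique SI (resp. SD) copula with $C^\uparrow=_{\partial_1S}C$ (resp. $C^\downarrow=_{\partial_1S}C$).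 *)

theory Defs
  imports "HOL-Probability.Probability"
begin

definition unit_sq :: "(real \<times> real) set" where
  "unit_sq = {0..1} \<times> {0..1}"

definition copula :: "(real \<Rightarrow> real \<Rightarrow> real) \<Rightarrow> bool" where
  "copula C \<longleftrightarrow>
     (\<forall>u\<in>{0..1}. \<forall>v\<in>{0..1}. C u v \<in> {0..1}) \<and>
     (\<forall>t\<in>{0..1}. C t 0 = 0 \<and> C 0 t = 0) \<and>
     (\<forall>t\<in>{0..1}. C t 1 = t \<and> C 1 t = t) \<and>
     (\<forall>u1\<in>{0..1}. \<forall>u2\<in>{0..1}. \<forall>v1\<in>{0..1}. \<forall>v2\<in>{0..1}.
        u1 \<le> u2 \<longrightarrow> v1 \<le> v2 \<longrightarrow> C u2 v2 - C u2 v1 - C u1 v2 + C u1 v1 \<ge> 0)"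

definition SI_copula :: "(real \<Rightarrow> real \<Rightarrow> real) \<Rightarrow> bool" where
  "SI_copula C \<longleftrightarrow> copula C \<and> (\<forall>v\<in>{0..1}. concave_on {0..1} (\<lambda>u. C u v))"

definition SD_copula :: "(real \<Rightarrow> real \<Rightarrow> real) \<Rightarrow> bool" where
  "SD_copula C \<longleftrightarrow> copula C \<and> (\<forall>v\<in>{0..1}. convex_on {0..1} (\<lambda>u. C u v))"

definition drearr :: "(real \<Rightarrow> real) \<Rightarrow> real \<Rightarrow> real" where
  "drearr f x = Inf {t. measure lebesgue {s\<in>{0..1}. f s > t} \<le> x}"

definition schur_le :: "(real \<Rightarrow> real) \<Rightarrow> (real \<Rightarrow> real) \<Rightarrow> bool" where
  "schur_le f g \<longleftrightarrow>
     (\<forall>x\<in>{0<..<1}. (LINT s:{0..x}|lebesgue. drearr f s) \<le> (LINT s:{0..x}|lebesgue. drearr g s)) \<and>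
     (LINT s:{0..1}|lebesgue. f s) = (LINT s:{0..1}|lebesgue. g s)"

text \<open>Partial derivative in the first argument (exists a.e. for copulas).\<close>
definition partial1 :: "(real \<Rightarrow> real \<Rightarrow> real) \<Rightarrow> real \<Rightarrow> real \<Rightarrow> real" where
  "partial1 C u v = deriv (\<lambda>x. C x v) u"

definition d1S_le :: "(real \<Rightarrow> real \<Rightarrow> real) \<Rightarrow> (real \<Rightarrow> real \<Rightarrow> real) \<Rightarrow> bool" where
  "d1S_le D E \<longleftrightarrow> (\<forall>v\<in>{0..1}. schur_le (\<lambda>u. partial1 D u v) (\<lambda>u. partial1 E u v))"

definition d1S_eq :: "(real \<Rightarrow> real \<Rightarrow> real) \<Rightarrow> (real \<Rightarrow> real \<Rightarrow> real) \<Rightarrow> bool" where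
  "d1S_eq D E \<longleftrightarrow> d1S_le D E \<and> d1S_le E D"

text \<open>Copulas are identified with their restriction to the unit square; to make the
  description unique as a HOL function we normalise the values outside the square to 0.\<close>
definition C_up :: "(real \<Rightarrow> real \<Rightarrow> real) \<Rightarrow> (real \<Rightarrow> real \<Rightarrow> real)" where
  "C_up C = (THE D. SI_copula D \<and> d1S_eq D C \<and> (\<forall>u v. (u, v) \<notin> unit_sq \<longrightarrow> D u v = 0))"

definition C_down :: "(real \<Rightarrow> real \<Rightarrow> real) \<Rightarrow> (real \<Rightarrow> real \<Rightarrow> real)" where
  "C_down C = (THE D. SD_copula D \<and> d1S_eq D C \<and> (\<forall>u v. (u, v) \<notin> unit_sq \<longrightarrow> D u v = 0))"

definition Tp :: "real \<Rightarrow> real \<Rightarrow> real" where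
  "Tp p u = (if u \<le> 1 - p then u else 1 - (u - (1 - p)))"

definition Cp :: "'a measure \<Rightarrow> ('a \<Rightarrow> real) \<Rightarrow> ('a \<Rightarrow> real) \<Rightarrow> real \<Rightarrow> real \<Rightarrow> real \<Rightarrow> real" where
  "Cp M U V p u v = measure M {\<omega>\<in>space M. Tp p (U \<omega>) \<le> u \<and> V \<omega> \<le> v}"

end

theory Submission
  imports Defs
begin

lemma slope3:
  fixes g :: "real \<Rightarrow> real"
  assumes cv: "convex_on I g" and I: "x \<in> I" "y \<in> I" and t: "x < t" "t < y"
  shows "(g t - g x)/(t - x) \<le> (g y - g x)/(y - x)" "(g y - g x)/(y - x) \<le> (g y - g t)/(y - t)"
proof -
  have e1: "(g t - g x)/(t - x) = (g x - g t)/(x - t)" by (simp add: divide_simps) argo?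
  have e2: "(g y - g x)/(y - x) = (g x - g y)/(x - y)" by (simp add: divide_simps) argo?
  have e3: "(g y - g t)/(y - t) = (g t - g y)/(t - y)" by (simp add: divide_simps) argo?
  show "(g t - g x)/(t - x) \<le> (g y - g x)/(y - x)"
    unfolding e1 e2 using convex_on_slope_le(1)[OF cv I t] .
  show "(g y - g x)/(y - x) \<le> (g y - g t)/(y - t)"
    unfolding e3 e2 using convex_on_slope_le(2)[OF cv I t] .
qed

lemma countable_disjoint_intervals:
  fixes L R :: "real \<Rightarrow> real"
  assumes "\<And>x. x \<in> J \<Longrightarrow> L x < R x"
    and "\<And>x z. x \<in> J \<Longrightarrow> z \<in> J \<Longrightarrow> x < z \<Longrightarrow> R x \<le> L z"
  shows "countable J"
proof -
  have "\<exists>q\<in>\<rat>. L x < q \<and> q < R x" if "x \<in> J" for x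
    using Rats_dense_in_real[OF assms(1)[OF that]] by blast
  then obtain q where q: "\<And>x. x \<in> J \<Longrightarrow> q x \<in> \<rat> \<and> L x < q x \<and> q x < R x" by metis
  have inj: "inj_on q J"
  proof (rule inj_onI, rule ccontr)
    fix x z assume xz: "x \<in> J" "z \<in> J" "q x = q z" "x \<noteq> z"
    show False
    proof (cases "x < z")
      case True
      with assms(2)[OF xz(1,2)] q[OF xz(1)] q[OF xz(2)] xz(3) show False by linarith
    next
      case False
      with xz(4) have "z < x" by linarith
      with assms(2)[OF xz(2,1)] q[OF xz(1)] q[OF xz(2)] xz(3) show False by linarith
    qed
  qed
  have "countable (q ` J)"
    by (rule countable_subset[OF _ countable_rat]) (use q in auto)
  then show ?thesis using inj by (rule countable_image_inj_on)
qed

lemma convex_diff_ae: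
  fixes g :: "real \<Rightarrow> real"
  assumes cv: "convex_on {a..b} g"
  obtains N where "countable N"
    "\<And>x. x \<in> {a<..<b} - N \<Longrightarrow> (g has_real_derivative deriv g x) (at x)"
    "\<And>x z. x \<in> {a<..<b} - N \<Longrightarrow> z \<in> {x<..b} \<Longrightarrow> deriv g x \<le> (g z - g x)/(z - x)"
    "\<And>x w. x \<in> {a<..<b} - N \<Longrightarrow> w \<in> {a..<x} \<Longrightarrow> (g x - g w)/(x - w) \<le> deriv g x"
proof -
  define Q where "Q x y = (g y - g x)/(y - x)" for x y
  have Qsym: "Q x y = Q y x" for x y unfolding Q_def by (simp add: divide_simps) argo?
  have sl1: "Q x t \<le> Q x y" if "x \<in> {a..b}" "y \<in> {a..b}" "x < t" "t < y" for x t y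
    using slope3(1)[OF cv that] unfolding Q_def .
  have sl2: "Q x y \<le> Q t y" if "x \<in> {a..b}" "y \<in> {a..b}" "x < t" "t < y" for x t y
    using slope3(2)[OF cv that] unfolding Q_def .
  have sl: "Q w x \<le> Q x y" if "w \<in> {a..b}" "y \<in> {a..b}" "w < x" "x < y" for w x y
    using sl1[OF that] sl2[OF that] by linarith
  define R where "R x = Inf (Q x ` {x<..b})" for x
  define L where "L x = Sup (Q x ` {a..<x})" for x
  have bddR: "bdd_below (Q x ` {x<..b})" if "x \<in> {a<..<b}" for x
    unfolding bdd_below_def using that by (intro exI[of _ "Q a x"]) (auto intro!: sl)
  have bddL: "bdd_above (Q x ` {a..<x})" if "x \<in> {a<..<b}" for x
    unfolding bdd_above_def using that
  proof (intro exI[of _ "Q x b"] ballI)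
    fix y assume "y \<in> Q x ` {a..<x}"
    then obtain w where w: "w \<in> {a..<x}" "y = Q x w" by auto
    show "y \<le> Q x b" unfolding w(2) Qsym[of x w] using w that by (intro sl) auto
  qed
  have neR: "Q x ` {x<..b} \<noteq> {}" if "x \<in> {a<..<b}" for x using that by auto
  have neL: "Q x ` {a..<x} \<noteq> {}" if "x \<in> {a<..<b}" for x using that by auto
  have RQ: "R x \<le> Q x z" if "x \<in> {a<..<b}" "z \<in> {x<..b}" for x z
    unfolding R_def using that by (intro cInf_lower bddR) auto
  have QL: "Q w x \<le> L x" if "x \<in> {a<..<b}" "w \<in> {a..<x}" for x w
    unfolding L_def using that by (subst Qsym) (intro cSup_upper bddL, auto)
  have LR: "L x \<le> R x" if x: "x \<in> {a<..<b}" for x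
    unfolding L_def
  proof (rule cSup_least[OF neL[OF x]])
    fix y assume "y \<in> Q x ` {a..<x}"
    then obtain w where w: "w \<in> {a..<x}" "y = Q x w" by auto
    show "y \<le> R x" unfolding R_def w(2) Qsym[of x w]
      using x w by (intro cInf_greatest neR) (auto intro!: sl)
  qed
  have RL: "R x \<le> L z" if "x \<in> {a<..<b}" "z \<in> {a<..<b}" "x < z" for x z
    using RQ[of x z] QL[of z x] that by (auto simp: Qsym[of x z])
  define N where "N = {x \<in> {a<..<b}. L x < R x}"
  have cN: "countable N"
    by (rule countable_disjoint_intervals[of N L R]) (auto simp: N_def intro: RL)
  have der: "(g has_real_derivative R x) (at x)" if x: "x \<in> {a<..<b} - N" for x
  proof -
    have LRe: "L x = R x" using x LR[of x] by (auto simp: N_def)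
    have "((\<lambda>y. Q x y) \<longlongrightarrow> R x) (at x)"
    proof (rule filterlim_split_at_real)
      show "((\<lambda>y. Q x y) \<longlongrightarrow> R x) (at_right x)"
      proof (rule order_tendstoI)
        fix c assume c: "c < R x"
        show "\<forall>\<^sub>F y in at_right x. c < Q x y"
          unfolding eventually_at_right_field using x c
          by (intro exI[of _ b]) (auto intro: less_le_trans[OF _ RQ])
      next
        fix c assume c: "R x < c"
        then obtain y0 where y0: "y0 \<in> {x<..b}" "Q x y0 < c"
          unfolding R_def using cInf_lessD[OF neR] x by (metis DiffD1 imageE)
        show "\<forall>\<^sub>F y in at_right x. Q x y < c"
          unfolding eventually_at_right_field using x y0
        proof (intro exI[of _ y0] conjI allI impI)
          fix y assume "x < y" "y < y0"
          then have "Q x y \<le> Q x y0" using x y0 by (intro sl1) auto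
          then show "Q x y < c" using y0 by linarith
        qed (use y0 in auto)
      qed
    next
      show "((\<lambda>y. Q x y) \<longlongrightarrow> R x) (at_left x)"
      proof (rule order_tendstoI)
        fix c assume c: "R x < c"
        show "\<forall>\<^sub>F y in at_left x. Q x y < c"
          unfolding eventually_at_left_field using x c LRe
          by (intro exI[of _ a]) (auto simp: Qsym[of x] intro: le_less_trans[OF QL])
      next
        fix c assume c: "c < R x"
        then obtain w0 where w0: "w0 \<in> {a..<x}" "c < Q x w0"
          unfolding LRe[symmetric] L_def using less_cSupD[OF neL] x by (metis DiffD1 imageE)
        show "\<forall>\<^sub>F y in at_left x. c < Q x y"
          unfolding eventually_at_left_field using x w0
        proof (intro exI[of _ w0] conjI allI impI)
          fix y assume "w0 < y" "y < x"
          then have "Q w0 x \<le> Q y x" using x w0 by (intro sl2) auto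
          then show "c < Q x y" using w0 Qsym[of x y] Qsym[of x w0] by linarith
        qed (use w0 in auto)
      qed
    qed
    then show ?thesis unfolding has_field_derivative_iff Q_def .
  qed
  have dR: "deriv g x = R x" if "x \<in> {a<..<b} - N" for x
    using der[OF that] by (rule DERIV_imp_deriv)
  show ?thesis
  proof (rule that[OF cN])
    fix x assume x: "x \<in> {a<..<b} - N"
    show "(g has_real_derivative deriv g x) (at x)" using der[OF x] dR[OF x] by simp
    show "deriv g x \<le> (g z - g x) / (z - x)" if "z \<in> {x<..b}" for z
      using RQ[of x z] that x dR[OF x] by (auto simp: Q_def)
    show "(g x - g w) / (x - w) \<le> deriv g x" if "w \<in> {a..<x}" for w
      using QL[of x w] that x dR[OF x] LR[of x] by (auto simp: Q_def N_def)
  qed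
qed

lemma negligible_countable': "countable (A::real set) \<Longrightarrow> negligible A"
  unfolding negligible_iff_null_sets
  by (rule null_sets_completionI, rule countable_imp_null_set_lborel)

lemma deriv_nonneg_mono:
  fixes g :: "real \<Rightarrow> real"
  assumes der: "(g has_real_derivative D) (at x)" and x: "a < x" "x < b"
    and mono: "\<And>y. x < y \<Longrightarrow> y < b \<Longrightarrow> g x \<le> g y"
  shows "0 \<le> D"
proof -
  have "(g has_real_derivative D) (at x within {x<..})"
    using der by (rule has_field_derivative_at_within)
  then have "((\<lambda>y. (g y - g x) / (y - x)) \<longlongrightarrow> D) (at_right x)"
    unfolding has_field_derivative_iff .
  moreover have "\<forall>\<^sub>F y in at_right x. 0 \<le> (g y - g x) / (y - x)"
    unfolding eventually_at_right_field using x mono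
    by (intro exI[of _ b]) (auto intro!: divide_nonneg_pos)
  ultimately show ?thesis
    by (intro tendsto_lowerbound) (auto simp: trivial_limit_at_right_real)
qed

lemma ftc_ae:
  fixes g :: "real \<Rightarrow> real"
  assumes ab: "a \<le> b" and cont: "continuous_on {a..b} g"
    and mono: "\<And>x y. a \<le> x \<Longrightarrow> x \<le> y \<Longrightarrow> y \<le> b \<Longrightarrow> g x \<le> g y"
    and N: "countable N"
    and der: "\<And>x. x \<in> {a<..<b} - N \<Longrightarrow> (g has_real_derivative deriv g x) (at x)"
  shows "deriv g absolutely_integrable_on {a..b}" "integral {a..b} (deriv g) = g b - g a"
proof -
  define S where "S = {a<..<b} - N"
  define G where "G x = g x + x" for x
  have negN: "negligible N" using N by (rule negligible_countable')
  have S: "S \<in> sets lebesgue" unfolding S_def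
    by (intro sets.Diff negligible_imp_sets[OF negN]) simp
  have dpos: "0 \<le> deriv g x" if "x \<in> S" for x
    using that unfolding S_def
    by (intro deriv_nonneg_mono[OF der, of x a b]) (auto intro!: mono)
  have derG: "(G has_real_derivative (deriv g x + 1)) (at x within S)" if "x \<in> S" for x
  proof -
    have "x \<in> {a<..<b} - N" using that by (simp add: S_def)
    then have "(g has_real_derivative deriv g x) (at x)" by (rule der)
    then have "((\<lambda>x. g x + x) has_real_derivative (deriv g x + 1)) (at x)"
      by (intro DERIV_add DERIV_ident)
    then show ?thesis unfolding G_def by (rule has_field_derivative_at_within)
  qed
  have Gmono: "G x < G y" if "a \<le> x" "x < y" "y \<le> b" for x y
    using mono[of x y] that unfolding G_def by auto
  have inj: "inj_on G S"
  proof (rule inj_onI, rule ccontr)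
    fix x y assume xy: "x \<in> S" "y \<in> S" "G x = G y" "x \<noteq> y"
    then have "x < y \<or> y < x" by linarith
    then show False using xy Gmono[of x y] Gmono[of y x] by (auto simp: S_def)
  qed
  have contG: "continuous_on {a..b} G" unfolding G_def
    by (intro continuous_intros cont)
  have sub1: "G ` S \<subseteq> {G a..G b}"
  proof
    fix y assume "y \<in> G ` S"
    then obtain x where x: "x \<in> S" "y = G x" by auto
    then show "y \<in> {G a..G b}" using Gmono[of a x] Gmono[of x b] by (auto simp: S_def)
  qed
  have sub2: "{G a..G b} - G ` S \<subseteq> G ` N \<union> {G a, G b}"
  proof
    fix y assume y: "y \<in> {G a..G b} - G ` S"
    show "y \<in> G ` N \<union> {G a, G b}"
    proof (cases "y = G a \<or> y = G b")
      case False
      obtain x where x: "a \<le> x" "x \<le> b" "G x = y"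
        using IVT'[of G a y b] y contG ab by auto
      have "x \<noteq> a" "x \<noteq> b" using x False by auto
      with x y have "x \<in> N" by (auto simp: S_def)
      with x show ?thesis by auto
    qed auto
  qed
  have negd: "negligible (G ` N \<union> {G a, G b})"
    by (intro negligible_countable') (use N in auto)
  have one_int: "(\<lambda>_. 1::real) absolutely_integrable_on {G a..G b}"
    by (rule absolutely_integrable_continuous_real) (rule continuous_on_const)
  have one_int': "(\<lambda>_. 1::real) absolutely_integrable_on G ` S"
    by (rule absolutely_integrable_spike_set[OF one_int])
       (use sub1 sub2 in \<open>auto intro!: negligible_subset[OF negd]\<close>)
  have "integral (G ` S) (\<lambda>_. 1::real) = integral {G a..G b} (\<lambda>_. 1::real)"
    by (rule integral_spike_set) (use sub1 sub2 in \<open>auto intro!: negligible_subset[OF negd]\<close>)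
  also have "\<dots> = G b - G a" using Gmono[of a b] ab
    by (cases "a = b") (auto simp: content_real)
  finally have int1: "integral (G ` S) (\<lambda>_. 1::real) = G b - G a" .
  have "(\<lambda>x. \<bar>deriv g x + 1\<bar> * 1) absolutely_integrable_on S \<and>
           integral S (\<lambda>x. \<bar>deriv g x + 1\<bar> * 1) = G b - G a"
    using has_absolute_integral_change_of_variables_1'[OF S derG inj, of "\<lambda>_. 1" "G b - G a"]
      one_int' int1 by simp
  note H = this
  have A: "(\<lambda>x. deriv g x + 1) absolutely_integrable_on S"
     and B: "integral S (\<lambda>x. deriv g x + 1) = G b - G a"
  proof -
    note h = H
    have e: "\<And>x. x \<in> S \<Longrightarrow> deriv g x + 1 = \<bar>deriv g x + 1\<bar> * 1" using dpos by simp
    show "(\<lambda>x. deriv g x + 1) absolutely_integrable_on S"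
      using absolutely_integrable_spike[OF conjunct1[OF h] negligible_empty] e by auto
    show "integral S (\<lambda>x. deriv g x + 1) = G b - G a"
      using integral_cong[of S "\<lambda>x. deriv g x + 1" "\<lambda>x. \<bar>deriv g x + 1\<bar> * 1"] h e by auto
  qed
  have oneS: "(\<lambda>_. 1::real) absolutely_integrable_on S"
    by (rule absolutely_integrable_spike_set[OF absolutely_integrable_continuous_real[OF continuous_on_const, of a b]])
       (auto simp: S_def intro!: negligible_subset[OF negligible_countable'[of "N \<union> {a,b}"]] N)
  have intS1: "integral S (\<lambda>_. 1::real) = b - a"
  proof -
    have "integral S (\<lambda>_. 1::real) = integral {a..b} (\<lambda>_. 1::real)"
      by (rule integral_spike_set) (auto simp: S_def intro!: negligible_subset[OF negligible_countable'[of "N \<union> {a,b}"]] N)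
    then show ?thesis using ab by (simp add: content_real)
  qed
  have dS: "deriv g absolutely_integrable_on S"
    using set_integral_diff(1)[OF A oneS] by simp
  have "integral S (deriv g) = integral S (\<lambda>x. (deriv g x + 1) - 1)" by simp
  also have "\<dots> = integral S (\<lambda>x. deriv g x + 1) - integral S (\<lambda>_. 1)"
    by (rule integral_diff) (use A oneS set_lebesgue_integral_eq_integral(1) in blast)+
  also have "\<dots> = g b - g a" using B intS1 by (simp add: G_def)
  finally have iS: "integral S (deriv g) = g b - g a" .
  have negd2: "negligible (N \<union> {a, b})" by (intro negligible_countable') (use N in auto)
  show "deriv g absolutely_integrable_on {a..b}"
    by (rule absolutely_integrable_spike_set[OF dS]) (auto simp: S_def intro!: negligible_subset[OF negd2])
  show "integral {a..b} (deriv g) = g b - g a"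
  proof -
    have "integral S (deriv g) = integral {a..b} (deriv g)"
      by (rule integral_spike_set) (auto simp: S_def intro!: negligible_subset[OF negd2])
    then show ?thesis using iS by simp
  qed
qed

lemma dist_thresh:
  fixes f :: "real \<Rightarrow> real"
  assumes mono: "\<And>s z. s \<in> {0..1} - N \<Longrightarrow> z \<in> {0..1} - N \<Longrightarrow> s \<le> z \<Longrightarrow> f z \<le> f s"
  shows "\<exists>c\<in>{0..1}. \<forall>s\<in>{0..1} - N - {c}. (t < f s \<longleftrightarrow> s < c)"
proof -
  define A where "A = {s \<in> {0..1} - N. t < f s}"
  define c where "c = (if A = {} then 0 else Sup A)"
  have bA: "bdd_above A" unfolding A_def bdd_above_def by (intro exI[of _ 1]) auto
  have c01: "c \<in> {0..1}"
  proof (cases "A = {}")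
    case False
    then obtain s where s: "s \<in> A" by auto
    have "s \<le> Sup A" by (rule cSup_upper[OF s bA])
    moreover have "Sup A \<le> 1" by (rule cSup_least[OF False]) (auto simp: A_def)
    moreover have "0 \<le> s" using s by (auto simp: A_def)
    ultimately show ?thesis using False by (auto simp: c_def)
  qed (auto simp: c_def)
  show ?thesis
  proof (rule bexI[OF _ c01], rule ballI)
    fix s assume s: "s \<in> {0..1} - N - {c}"
    show "t < f s \<longleftrightarrow> s < c"
    proof
      assume "t < f s"
      then have "s \<in> A" using s by (auto simp: A_def)
      then have "s \<le> c" using cSup_upper[OF _ bA] by (auto simp: c_def)
      then show "s < c" using s by auto
    next
      assume sc: "s < c"
      then have ne: "A \<noteq> {}" using s by (auto simp: c_def)
      then have "s < Sup A" using sc by (simp add: c_def)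
      then obtain s' where s': "s' \<in> A" "s < s'" using less_cSupD[OF ne] by blast
      then have "f s' \<le> f s" using s by (intro mono) (auto simp: A_def)
      then show "t < f s" using s' by (auto simp: A_def)
    qed
  qed
qed

lemma measure_ae_interval:
  assumes X: "countable X" and I: "I \<in> lmeasurable" "I \<subseteq> {0..1}"
    and P: "\<And>s. s \<in> {0..1} - X \<Longrightarrow> (P s \<longleftrightarrow> s \<in> I)"
  shows "measure lebesgue {s\<in>{0..1::real}. P s} = measure lebesgue I"
proof (rule measure_negligible_symdiff[OF I(1)])
  show "negligible (I - {s\<in>{0..1}. P s} \<union> ({s\<in>{0..1}. P s} - I))"
    by (rule negligible_subset[OF negligible_countable'[OF X]]) (use P I(2) in auto)
qed

lemma measure_Ico01: "0 \<le> c \<Longrightarrow> measure lebesgue {0..<c::real} = c"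
  by (simp add: measure_completion)

lemma drearr_ae:
  fixes f :: "real \<Rightarrow> real"
  assumes N: "countable N"
    and mono: "\<And>s z. s \<in> {0..1} - N \<Longrightarrow> z \<in> {0..1} - N \<Longrightarrow> s \<le> z \<Longrightarrow> f z \<le> f s"
    and bnd: "\<And>s. s \<in> {0..1} - N \<Longrightarrow> 0 \<le> f s"
  obtains E where "countable E" "\<And>s. s \<in> {0<..<1} - E \<Longrightarrow> drearr f s = f s"
proof -
  define m where "m t = measure lebesgue {s\<in>{0..1}. t < f s}" for t
  have mc: "\<exists>c\<in>{0..1}. m t = c \<and> (\<forall>s\<in>{0..1} - N - {c}. (t < f s \<longleftrightarrow> s < c))" for t
  proof -
    have "\<exists>c\<in>{0..1}. \<forall>s\<in>{0..1} - N - {c}. (t < f s \<longleftrightarrow> s < c)"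
      by (rule dist_thresh) (rule mono)
    then obtain c where c: "c \<in> {0..1}" "\<And>s. s \<in> {0..1} - N - {c} \<Longrightarrow> (t < f s \<longleftrightarrow> s < c)"
      by blast
    have "m t = measure lebesgue {0..<c}" unfolding m_def
    proof (rule measure_ae_interval[of "N \<union> {c}"])
      show "countable (N \<union> {c})" using N by simp
      show "{0..<c} \<in> lmeasurable" by (intro bounded_set_imp_lmeasurable) auto
      show "{0..<c} \<subseteq> {0..1}" using c(1) by auto
      fix s assume "s \<in> {0..1} - (N \<union> {c})"
      then show "t < f s \<longleftrightarrow> s \<in> {0..<c}" using c(2)[of s] by auto
    qed
    also have "\<dots> = c" using c by (simp add: measure_Ico01)
    finally show ?thesis using c by blast
  qed
  have ex_y: "\<exists>y\<in>{x<..<1}. y \<notin> N" if "x < 1" for x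
  proof (rule ccontr)
    assume "\<not> ?thesis"
    then have "{x<..<1} \<subseteq> N" by auto
    then have "countable {x<..<1}" using N countable_subset by blast
    then show False using uncountable_open_interval[of x 1] that by simp
  qed
  have up: "m t \<le> x" if x: "x \<in> {0<..<1} - N" and t: "f x < t" for x t
  proof -
    obtain c where c: "c \<in> {0..1}" "m t = c" "\<And>s. s\<in>{0..1} - N - {c} \<Longrightarrow> (t < f s \<longleftrightarrow> s < c)"
      using mc[of t] by blast
    show ?thesis
    proof (cases "x = c")
      case False
      then have "\<not> x < c" using c(3)[of x] x t by auto
      then show ?thesis using c by auto
    qed (use c in auto)
  qed
  have low: "f y \<le> t" if x: "x \<in> {0<..<1} - N" and y: "y \<in> {x<..<1} - N" and mt: "m t \<le> x" for x y t
  proof (rule ccontr)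
    assume ty: "\<not> f y \<le> t"
    obtain c where c: "c \<in> {0..1}" "m t = c" "\<And>s. s\<in>{0..1} - N - {c} \<Longrightarrow> (t < f s \<longleftrightarrow> s < c)"
      using mc[of t] by blast
    show False
    proof (cases "y = c")
      case True then show False using c mt y by auto
    next
      case False
      then have "y < c" using c(3)[of y] y x ty by auto
      then show False using c mt y by auto
    qed
  qed
  have dr: "drearr f x = Inf {t. m t \<le> x}" for x unfolding drearr_def m_def ..
  have d_le: "drearr f x \<le> f x" and d_ge: "\<And>y. y \<in> {x<..<1} - N \<Longrightarrow> f y \<le> drearr f x"
    if x: "x \<in> {0<..<1} - N" for x
  proof -
    obtain y0 where y0: "y0 \<in> {x<..<1}" "y0 \<notin> N" using ex_y[of x] x by auto
    have ne: "{t. m t \<le> x} \<noteq> {}" using up[OF x, of "f x + 1"] by auto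
    have bdd: "bdd_below {t. m t \<le> x}"
      unfolding bdd_below_def using low[OF x, of y0] y0
      by (intro exI[of _ "f y0"]) auto
    show "f y \<le> drearr f x" if "y \<in> {x<..<1} - N" for y
      unfolding dr by (rule cInf_greatest[OF ne]) (use low[OF x that] in auto)
    show "drearr f x \<le> f x"
    proof (rule ccontr)
      assume "\<not> drearr f x \<le> f x"
      then have lt: "f x < (drearr f x + f x) / 2" "(drearr f x + f x) / 2 < drearr f x" by auto
      have "Inf {t. m t \<le> x} \<le> (drearr f x + f x) / 2"
        by (rule cInf_lower[OF _ bdd]) (use up[OF x lt(1)] in auto)
      then show False using lt(2) unfolding dr by auto
    qed
  qed
  define E0 where "E0 = {x \<in> {0<..<1} - N. drearr f x < f x}"
  have cE0: "countable E0"
  proof (rule countable_disjoint_intervals[of E0 "\<lambda>x. - f x" "\<lambda>x. - drearr f x"])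
    show "- f x < - drearr f x" if "x \<in> E0" for x using that by (auto simp: E0_def)
    show "- drearr f x \<le> - f z" if "x \<in> E0" "z \<in> E0" "x < z" for x z
      using that d_ge[of x z] by (auto simp: E0_def)
  qed
  show ?thesis
  proof (rule that[of "N \<union> E0"])
    show "countable (N \<union> E0)" using N cE0 by auto
    show "drearr f s = f s" if "s \<in> {0<..<1} - (N \<union> E0)" for s
      using d_le[of s] that by (auto simp: E0_def)
  qed
qed

lemma concave_deriv_props:
  fixes h :: "real \<Rightarrow> real"
  assumes conc: "concave_on {0..1} h"
    and lip: "\<And>x y. 0 \<le> x \<Longrightarrow> x \<le> y \<Longrightarrow> y \<le> 1 \<Longrightarrow> h x \<le> h y \<and> h y - h x \<le> y - x"
  obtains N where "countable N" "0 \<in> N" "1 \<in> N"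
    "\<And>x. x \<in> {0<..<1} - N \<Longrightarrow> (h has_real_derivative deriv h x) (at x)"
    "\<And>x. x \<in> {0..1} - N \<Longrightarrow> 0 \<le> deriv h x \<and> deriv h x \<le> 1"
    "\<And>x z. x \<in> {0..1} - N \<Longrightarrow> z \<in> {0..1} - N \<Longrightarrow> x \<le> z \<Longrightarrow> deriv h z \<le> deriv h x"
proof -
  have cv: "convex_on {0..1} (\<lambda>x. - h x)" using conc by (simp add: concave_on_def)
  obtain N0 where N0: "countable N0"
    "\<And>x. x \<in> {0<..<1} - N0 \<Longrightarrow> ((\<lambda>x. - h x) has_real_derivative deriv (\<lambda>x. - h x) x) (at x)"
    "\<And>x z. x \<in> {0<..<1} - N0 \<Longrightarrow> z \<in> {x<..1} \<Longrightarrow> deriv (\<lambda>x. - h x) x \<le> (- h z - - h x)/(z - x)"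
    "\<And>x w. x \<in> {0<..<1} - N0 \<Longrightarrow> w \<in> {0..<x} \<Longrightarrow> (- h x - - h w)/(x - w) \<le> deriv (\<lambda>x. - h x) x"
    using convex_diff_ae[OF cv] by blast
  have dh: "(h has_real_derivative - deriv (\<lambda>x. - h x) x) (at x)" if "x \<in> {0<..<1} - N0" for x
    using DERIV_minus[OF N0(2)[OF that]] by simp
  have dh': "deriv h x = - deriv (\<lambda>x. - h x) x" if "x \<in> {0<..<1} - N0" for x
    using dh[OF that] by (rule DERIV_imp_deriv)
  have lo: "(h z - h x)/(z - x) \<le> deriv h x" if "x \<in> {0<..<1} - N0" "z \<in> {x<..1}" for x z
  proof -
    have "(- h z - - h x)/(z - x) = - ((h z - h x)/(z - x))" by (simp add: minus_divide_left)
    then show ?thesis using N0(3)[OF that] dh'[OF that(1)] by linarith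
  qed
  have hi: "deriv h x \<le> (h x - h w)/(x - w)" if "x \<in> {0<..<1} - N0" "w \<in> {0..<x}" for x w
  proof -
    have "(- h x - - h w)/(x - w) = - ((h x - h w)/(x - w))" by (simp add: minus_divide_left)
    then show ?thesis using N0(4)[OF that] dh'[OF that(1)] by linarith
  qed
  show ?thesis
  proof (rule that[of "N0 \<union> {0,1}"])
    show "countable (N0 \<union> {0,1})" using N0(1) by simp
    show "0 \<in> N0 \<union> {0,1}" "1 \<in> N0 \<union> {0,1}" by auto
    show "(h has_real_derivative deriv h x) (at x)" if "x \<in> {0<..<1} - (N0 \<union> {0,1})" for x
      using dh[of x] dh'[of x] that by auto
    show "0 \<le> deriv h x \<and> deriv h x \<le> 1" if x: "x \<in> {0..1} - (N0 \<union> {0,1})" for x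
    proof
      have x': "x \<in> {0<..<1} - N0" using x by auto
      have "0 \<le> (h 1 - h x)/(1 - x)" using lip[of x 1] x by (auto intro: divide_nonneg_pos)
      then show "0 \<le> deriv h x" using lo[OF x', of 1] x by auto
      have "(h x - h 0)/(x - 0) \<le> 1" using lip[of 0 x] x by (auto simp: divide_le_eq)
      moreover have "deriv h x \<le> (h x - h 0)/(x - 0)" using hi[OF x', of 0] x by auto
      ultimately show "deriv h x \<le> 1" by linarith
    qed
    show "deriv h z \<le> deriv h x"
      if x: "x \<in> {0..1} - (N0 \<union> {0,1})" and z: "z \<in> {0..1} - (N0 \<union> {0,1})" and xz: "x \<le> z" for x z
    proof (cases "x = z")
      case False
      then have "x < z" using xz by auto
      then have "deriv h z \<le> (h z - h x)/(z - x)" "(h z - h x)/(z - x) \<le> deriv h x"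
        using hi[of z x] lo[of x z] x z by auto
      then show ?thesis by linarith
    qed simp
  qed
qed

lemma K_int:
  fixes h :: "real \<Rightarrow> real"
  assumes conc: "concave_on {0..1} h" and cont: "continuous_on {0..1} h"
    and lip: "\<And>x y. 0 \<le> x \<Longrightarrow> x \<le> y \<Longrightarrow> y \<le> 1 \<Longrightarrow> h x \<le> h y \<and> h y - h x \<le> y - x"
    and u: "u \<in> {0..1}"
  shows "(LINT s:{0..u}|lebesgue. deriv h s) = h u - h 0"
    and "(LINT s:{0..u}|lebesgue. drearr (deriv h) s) = h u - h 0"
proof -
  obtain N where N: "countable N" "0 \<in> N" "1 \<in> N"
    "\<And>x. x \<in> {0<..<1} - N \<Longrightarrow> (h has_real_derivative deriv h x) (at x)"
    "\<And>x. x \<in> {0..1} - N \<Longrightarrow> 0 \<le> deriv h x \<and> deriv h x \<le> 1"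
    "\<And>x z. x \<in> {0..1} - N \<Longrightarrow> z \<in> {0..1} - N \<Longrightarrow> x \<le> z \<Longrightarrow> deriv h z \<le> deriv h x"
    using concave_deriv_props[OF conc lip] by blast
  have ftc: "deriv h absolutely_integrable_on {0..u}" "integral {0..u} (deriv h) = h u - h 0"
  proof -
    have c: "continuous_on {0..u} h" using u by (intro continuous_on_subset[OF cont]) auto
    show "deriv h absolutely_integrable_on {0..u}" "integral {0..u} (deriv h) = h u - h 0"
      using ftc_ae[of 0 u h N] c u N(1) lip N(4) by auto
  qed
  show A: "(LINT s:{0..u}|lebesgue. deriv h s) = h u - h 0"
    using set_lebesgue_integral_eq_integral(2)[OF ftc(1)] ftc(2) by simp
  obtain E where E: "countable E" "\<And>s. s \<in> {0<..<1} - E \<Longrightarrow> drearr (deriv h) s = deriv h s"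
  proof (rule drearr_ae[of N "deriv h"])
    show "countable N" by (rule N(1))
    show "deriv h z \<le> deriv h s" if "s \<in> {0..1} - N" "z \<in> {0..1} - N" "s \<le> z" for s z
      using that by (rule N(6))
    show "0 \<le> deriv h s" if "s \<in> {0..1} - N" for s using N(5)[OF that] by simp
  qed blast
  have "(LINT s:{0..u}|lebesgue. drearr (deriv h) s) = (LINT s:{0..u}|lebesgue. deriv h s)"
    unfolding set_lebesgue_integral_def
  proof (rule integral_discrete_difference[of "E \<union> {0,1}"])
    show "countable (E \<union> {0,1})" using E(1) by simp
    show "emeasure lebesgue {x} = 0" for x by (simp add: emeasure_completion)
    show "{x} \<in> sets lebesgue" for x :: real by simp
    show "indicat_real {0..u} x *\<^sub>R drearr (deriv h) x = indicat_real {0..u} x *\<^sub>R deriv h x"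
      if "x \<notin> E \<union> {0,1}" for x
      using E(2)[of x] that u by (cases "x \<in> {0..u}") auto
  qed
  then show "(LINT s:{0..u}|lebesgue. drearr (deriv h) s) = h u - h 0" using A by simp
qed

lemma copula_lip:
  assumes D: "copula D" and v: "v \<in> {0..1}" and xy: "0 \<le> x" "x \<le> y" "y \<le> 1"
  shows "D x v \<le> D y v \<and> D y v - D x v \<le> y - x"
proof -
  have c: "\<forall>u1\<in>{0..1}. \<forall>u2\<in>{0..1}. \<forall>v1\<in>{0..1}. \<forall>v2\<in>{0..1}.
        u1 \<le> u2 \<longrightarrow> v1 \<le> v2 \<longrightarrow> D u2 v2 - D u2 v1 - D u1 v2 + D u1 v1 \<ge> 0"
    and b0: "\<forall>t\<in>{0..1}. D t 0 = 0 \<and> D 0 t = 0" and b1: "\<forall>t\<in>{0..1}. D t 1 = t \<and> D 1 t = t"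
    using D unfolding copula_def by blast+
  have "D y v - D y 0 - D x v + D x 0 \<ge> 0" using c xy v by auto
  moreover have "D y 1 - D y v - D x 1 + D x v \<ge> 0" using c xy v by auto
  ultimately show ?thesis using b0 b1 xy by auto
qed

lemma copula_cont:
  assumes D: "copula D" and v: "v \<in> {0..1}"
  shows "continuous_on {0..1} (\<lambda>x. D x v)"
proof (rule lipschitz_on_continuous_on)
  show "1-lipschitz_on {0..1} (\<lambda>x. D x v)"
  proof (rule lipschitz_onI)
    fix x y :: real assume xy: "x \<in> {0..1}" "y \<in> {0..1}"
    show "dist (D x v) (D y v) \<le> 1 * dist x y"
    proof (cases "x \<le> y")
      case True then show ?thesis using copula_lip[OF D v, of x y] xy by (auto simp: dist_real_def)
    next
      case False then show ?thesis using copula_lip[OF D v, of y x] xy by (auto simp: dist_real_def)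
    qed
  qed simp
qed

definition Phi :: "(real \<Rightarrow> real \<Rightarrow> real) \<Rightarrow> real \<Rightarrow> real \<Rightarrow> real \<Rightarrow> real" where
  "Phi C p u v = C (min u (1-p)) v + v - C (min (2-p-u) 1) v"

locale cp_setting =
  fixes M :: "'a measure" and U V :: "'a \<Rightarrow> real" and C :: "real \<Rightarrow> real \<Rightarrow> real"
  assumes SI: "SI_copula C"
    and M: "prob_space M"
    and U[measurable]: "U \<in> borel_measurable M" and V[measurable]: "V \<in> borel_measurable M"
    and dist: "\<forall>u\<in>{0..1}. \<forall>v\<in>{0..1}.
                 measure M {\<omega>\<in>space M. U \<omega> \<le> u \<and> V \<omega> \<le> v} = C u v"
begin

interpretation prob_space M by (rule M)

lemma cop: "copula C" using SI by (simp add: SI_copula_def)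

lemma C0: "t \<in> {0..1} \<Longrightarrow> C t 0 = 0 \<and> C 0 t = 0" using cop by (simp add: copula_def)
lemma C1: "t \<in> {0..1} \<Longrightarrow> C t 1 = t \<and> C 1 t = t" using cop by (simp add: copula_def)

lemma ev_meas[measurable]: "{\<omega>\<in>space M. U \<omega> \<le> u \<and> V \<omega> \<le> v} \<in> sets M" by measurable

lemma AE_null: assumes "A \<in> sets M" "measure M A = 0" shows "AE \<omega> in M. \<omega> \<notin> A"
proof (rule AE_not_in)
  show "A \<in> null_sets M" using assms by (simp add: null_sets_def emeasure_eq_measure)
qed

lemma AE_le1: "AE \<omega> in M. U \<omega> \<le> 1 \<and> V \<omega> \<le> 1"
proof -
  have "measure M {\<omega>\<in>space M. U \<omega> \<le> 1 \<and> V \<omega> \<le> 1} = 1" using dist C1[of 1] by simp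
  then have "AE \<omega> in M. \<omega> \<in> {\<omega>\<in>space M. U \<omega> \<le> 1 \<and> V \<omega> \<le> 1}" by (rule AE_prob_1)
  then show ?thesis by auto
qed

lemma AE_pos: "AE \<omega> in M. 0 < U \<omega>"
proof -
  have "measure M {\<omega>\<in>space M. U \<omega> \<le> 0 \<and> V \<omega> \<le> 1} = 0" using dist C0[of 1] by simp
  then have "AE \<omega> in M. \<omega> \<notin> {\<omega>\<in>space M. U \<omega> \<le> 0 \<and> V \<omega> \<le> 1}" by (intro AE_null) simp
  then show ?thesis using AE_le1 AE_space by eventually_elim auto
qed

lemma AE_neq: assumes w: "w \<in> {0..1}" shows "AE \<omega> in M. U \<omega> \<noteq> w"
proof (cases "w = 0")
  case True from AE_pos show ?thesis by eventually_elim (use True in auto)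
next
  case False
  define A where "A = {\<omega>\<in>space M. U \<omega> = w \<and> V \<omega> \<le> 1}"
  have Am[measurable]: "A \<in> sets M" unfolding A_def by measurable
  have bnd: "measure M A \<le> d" if d: "0 < d" "d \<le> w" for d
  proof -
    have sub: "A \<subseteq> {\<omega>\<in>space M. U \<omega> \<le> w \<and> V \<omega> \<le> 1} - {\<omega>\<in>space M. U \<omega> \<le> w - d \<and> V \<omega> \<le> 1}"
      using d by (auto simp: A_def)
    have "measure M A \<le> measure M ({\<omega>\<in>space M. U \<omega> \<le> w \<and> V \<omega> \<le> 1} - {\<omega>\<in>space M. U \<omega> \<le> w - d \<and> V \<omega> \<le> 1})"
      by (rule finite_measure_mono[OF sub]) measurable
    also have "\<dots> = measure M {\<omega>\<in>space M. U \<omega> \<le> w \<and> V \<omega> \<le> 1} - measure M {\<omega>\<in>space M. U \<omega> \<le> w - d \<and> V \<omega> \<le> 1}"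
      by (rule finite_measure_Diff) (use d in auto)
    also have "\<dots> = d" using dist w d C1[of w] C1[of "w-d"] by simp
    finally show ?thesis .
  qed
  have "measure M A = 0"
  proof (rule ccontr)
    assume "measure M A \<noteq> 0"
    then have pos: "0 < measure M A" using measure_nonneg[of M A] by linarith
    have "measure M A \<le> min w (measure M A / 2)" using False w pos by (intro bnd) auto
    then show False using pos by auto
  qed
  then have "AE \<omega> in M. \<omega> \<notin> A" by (intro AE_null) auto
  then show ?thesis using AE_le1 AE_space by eventually_elim (auto simp: A_def)
qed

lemma PV: assumes v: "v \<in> {0..1}" shows "measure M {\<omega>\<in>space M. V \<omega> \<le> v} = v"
proof -
  have "measure M {\<omega>\<in>space M. V \<omega> \<le> v} = measure M {\<omega>\<in>space M. U \<omega> \<le> 1 \<and> V \<omega> \<le> v}"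
    by (rule finite_measure_eq_AE) (use AE_le1 in \<open>eventually_elim, auto\<close>)
  then show ?thesis using dist v C1[of v] by simp
qed

lemma Tp_meas[measurable]: "{\<omega>\<in>space M. Tp p (U \<omega>) \<le> u \<and> V \<omega> \<le> v} \<in> sets M"
  unfolding Tp_def by measurable

lemma Cp_Phi:
  assumes p: "p \<in> {0..1}" and u: "u \<in> {0..1}" and v: "v \<in> {0..1}"
  shows "Cp M U V p u v = Phi C p u v"
proof -
  define m1 where "m1 = min u (1-p)"
  define m2 where "m2 = min (2-p-u) 1"
  have m1: "m1 \<in> {0..1}" "m1 \<le> 1 - p" using p u by (auto simp: m1_def)
  have m2: "m2 \<in> {0..1}" "1 - p \<le> m2" using p u by (auto simp: m2_def)
  define A where "A = {\<omega>\<in>space M. Tp p (U \<omega>) \<le> u \<and> V \<omega> \<le> v}"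
  define B1 where "B1 = {\<omega>\<in>space M. U \<omega> \<le> m1 \<and> V \<omega> \<le> v}"
  define B2 where "B2 = {\<omega>\<in>space M. V \<omega> \<le> v} - {\<omega>\<in>space M. U \<omega> \<le> m2 \<and> V \<omega> \<le> v}"
  have [measurable]: "A \<in> sets M" "B1 \<in> sets M" "B2 \<in> sets M" unfolding A_def B1_def B2_def by measurable
  have "AE \<omega> in M. (\<omega> \<in> A) = (\<omega> \<in> B1 \<union> B2)"
    using AE_pos AE_le1 AE_neq[OF m2(1)]
  proof eventually_elim
    case (elim \<omega>)
    show ?case
    proof (cases "U \<omega> \<le> 1 - p")
      case True
      then show ?thesis using elim m1 m2 by (auto simp: A_def B1_def B2_def Tp_def m1_def)
    next
      case False
      have "Tp p (U \<omega>) = 2 - p - U \<omega>" using False by (simp add: Tp_def)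
      moreover have "(2 - p - U \<omega> \<le> u) = (m2 < U \<omega>)" using elim False by (auto simp: m2_def)
      ultimately show ?thesis using elim m1 m2 False by (auto simp: A_def B1_def B2_def)
    qed
  qed
  then have "measure M A = measure M (B1 \<union> B2)" by (rule finite_measure_eq_AE) auto
  also have "\<dots> = measure M B1 + measure M B2"
    by (rule finite_measure_Union) (use m1 m2 in \<open>auto simp: B1_def B2_def\<close>)
  also have "measure M B2 = measure M {\<omega>\<in>space M. V \<omega> \<le> v} - measure M {\<omega>\<in>space M. U \<omega> \<le> m2 \<and> V \<omega> \<le> v}"
    unfolding B2_def by (rule finite_measure_Diff) auto
  also have "\<dots> = v - C m2 v" using PV[OF v] dist m2 v by simp
  also have "measure M B1 = C m1 v" using dist m1 v by (simp add: B1_def)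
  finally show ?thesis by (simp add: Cp_def A_def Phi_def m1_def m2_def)
qed

end

lemma concave_incr:
  fixes h :: "real \<Rightarrow> real"
  assumes conc: "concave_on {0..1} h" and ab: "0 \<le> a" "a \<le> b" and l: "0 \<le> l" "b + l \<le> 1"
  shows "h (b + l) - h b \<le> h (a + l) - h a"
proof (cases "a = b \<or> l = 0")
  case True then show ?thesis by auto
next
  case False
  then have ab': "a < b" and l': "0 < l" using ab l by auto
  define D where "D = b + l - a"
  define t where "t = l / D"
  have D: "0 < D" using ab' l' by (simp add: D_def)
  have t: "0 \<le> t" "t \<le> 1" using D l' ab' by (auto simp: t_def D_def divide_le_eq)
  have tD: "t * D = l" using D by (simp add: t_def)
  have "(1 - t) *\<^sub>R a + t *\<^sub>R (b + l) = a + t * D" by (simp add: D_def algebra_simps)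
  then have e1: "(1 - t) *\<^sub>R a + t *\<^sub>R (b + l) = a + l" using tD by simp
  have "(1 - t) *\<^sub>R (b + l) + t *\<^sub>R a = b + l - t * D" by (simp add: D_def algebra_simps)
  then have e2: "(1 - t) *\<^sub>R (b + l) + t *\<^sub>R a = b" using tD by simp
  have i1: "h ((1 - t) *\<^sub>R a + t *\<^sub>R (b + l)) \<ge> (1 - t) * h a + t * h (b + l)"
    by (rule concave_onD[OF conc t]) (use ab l in auto)
  have i2: "h ((1 - t) *\<^sub>R (b + l) + t *\<^sub>R a) \<ge> (1 - t) * h (b + l) + t * h a"
    by (rule concave_onD[OF conc t]) (use ab l in auto)
  show ?thesis using i1 i2 unfolding e1 e2 by (simp add: algebra_simps)
qed

context cp_setting
begin

lemma hv_props:
  assumes v: "v \<in> {0..1}"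
  shows "concave_on {0..1} (\<lambda>x. C x v)" "continuous_on {0..1} (\<lambda>x. C x v)"
    "\<And>x y. 0 \<le> x \<Longrightarrow> x \<le> y \<Longrightarrow> y \<le> 1 \<Longrightarrow> C x v \<le> C y v \<and> C y v - C x v \<le> y - x"
  using SI v copula_cont[OF cop v] copula_lip[OF cop v] by (auto simp: SI_copula_def)

lemma Phi_low: "p \<in> {0..1} \<Longrightarrow> u \<in> {0..1} \<Longrightarrow> v \<in> {0..1} \<Longrightarrow> u \<le> 1 - p \<Longrightarrow> Phi C p u v = C u v"
  using C1[of v] by (simp add: Phi_def)

lemma Phi_high: "p \<in> {0..1} \<Longrightarrow> u \<in> {0..1} \<Longrightarrow> v \<in> {0..1} \<Longrightarrow> 1 - p \<le> u \<Longrightarrow>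
    Phi C p u v = C (1-p) v + v - C (2-p-u) v"
  by (simp add: Phi_def)

lemma Phi_mono:
  assumes pp: "0 \<le> p" "p \<le> p'" "p' \<le> 1" and u: "u \<in> {0..1}" and v: "v \<in> {0..1}"
  shows "Phi C p' u v \<le> Phi C p u v"
proof -
  note hp = hv_props[OF v]
  consider "u \<le> 1 - p'" | "1 - p' < u" "u \<le> 1 - p" | "1 - p < u" by linarith
  then show ?thesis
  proof cases
    case 1
    then show ?thesis using Phi_low[of p u v] Phi_low[of p' u v] pp u v by auto
  next
    case 2
    have "C 1 v - C (2 - p' - u) v \<le> C (1 - p' + (u - (1 - p'))) v - C (1 - p') v"
      using concave_incr[OF hp(1), of "1 - p'" "2 - p' - u" "u - (1 - p')"] 2 pp u by auto
    then show ?thesis using Phi_low[of p u v] Phi_high[of p' u v] 2 pp u v C1[of v] by auto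
  next
    case 3
    have "C (2 - p - u) v - C (1 - p) v \<le> C (1 - p' + (1 - u)) v - C (1 - p') v"
      using concave_incr[OF hp(1), of "1 - p'" "1 - p" "1 - u"] 3 pp u
      by (auto simp: algebra_simps)
    then show ?thesis using Phi_high[of p u v] Phi_high[of p' u v] 3 pp u v
      by (auto simp: algebra_simps)
  qed
qed

lemma Phi_cont:
  assumes u: "u \<in> {0..1}" and v: "v \<in> {0..1}"
  shows "continuous_on {0..1} (\<lambda>p. Phi C p u v)"
proof -
  note hp = hv_props[OF v]
  have c1: "continuous_on {0..1} (\<lambda>p. C (min u (1-p)) v)"
    by (rule continuous_on_compose2[OF hp(2), of _ "\<lambda>p. min u (1-p)"])
       (use u in \<open>auto intro!: continuous_intros\<close>)
  have c2: "continuous_on {0..1} (\<lambda>p. C (min (2-p-u) 1) v)"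
    by (rule continuous_on_compose2[OF hp(2), of _ "\<lambda>p. min (2-p-u) 1"])
       (use u in \<open>auto intro!: continuous_intros\<close>)
  show ?thesis unfolding Phi_def by (intro continuous_intros c1 c2)
qed

end

lemma deriv_local:
  assumes S: "open S" "x \<in> S" and eq: "\<And>y. y \<in> S \<Longrightarrow> f y = g y"
  shows "deriv f x = deriv g x"
proof -
  have ev: "\<forall>\<^sub>F y in nhds x. f y = g y"
    using S eq by (auto simp: eventually_nhds)
  have "\<And>D. (f has_field_derivative D) (at x) = (g has_field_derivative D) (at x)"
    by (rule DERIV_cong_ev[OF refl ev refl])
  then show ?thesis unfolding deriv_def by simp
qed

lemma measure_eq_ae_general:
  assumes A: "A \<subseteq> {0..1::real}" and B: "B \<subseteq> {0..1}" and X: "countable X"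
    and AB: "(A - B) \<union> (B - A) \<subseteq> X"
  shows "measure lebesgue A = measure lebesgue B"
proof -
  have neg: "negligible ((A - B) \<union> (B - A))"
    by (rule negligible_subset[OF negligible_countable'[OF X] AB])
  have neg': "negligible ((B - A) \<union> (A - B))" using neg by (simp add: Un_commute)
  show ?thesis
  proof (cases "A \<in> sets lebesgue")
    case True
    then have "A \<in> lmeasurable" using A bounded_subset[of "{0..1}" A] by (intro bounded_set_imp_lmeasurable) auto
    then show ?thesis using measure_negligible_symdiff[of A B] neg by simp
  next
    case False
    have "B \<notin> sets lebesgue"
    proof
      assume "B \<in> sets lebesgue"
      then have "A \<in> sets lebesgue" by (rule sets_negligible_symdiff[OF _ neg'])
      with False show False by simp
    qed
    then show ?thesis using False by (simp add: measure_notin_sets)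
  qed
qed

lemma drearr_cong:
  assumes "\<And>t. measure lebesgue {s\<in>{0..1}. t < f s} = measure lebesgue {s\<in>{0..1}. t < g s}"
  shows "drearr f = drearr g"
  unfolding drearr_def using assms by simp

lemma schur_cong:
  assumes eq: "\<And>s. s \<in> {0<..<1} \<Longrightarrow> f s = f' s"
  shows "drearr f = drearr f'" "(LINT s:{0..1}|lebesgue. f s) = (LINT s:{0..1}|lebesgue. f' s)"
proof -
  show "drearr f = drearr f'"
  proof (rule drearr_cong, rule measure_eq_ae_general[of _ _ "{0,1}"])
    fix t show "(({s\<in>{0..1}. t < f s} - {s\<in>{0..1}. t < f' s}) \<union> ({s\<in>{0..1}. t < f' s} - {s\<in>{0..1}. t < f s})) \<subseteq> {0,1}"
    proof (intro subsetI)
      fix s assume s: "s \<in> (({s\<in>{0..1}. t < f s} - {s\<in>{0..1}. t < f' s}) \<union> ({s\<in>{0..1}. t < f' s} - {s\<in>{0..1}. t < f s}))"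
      then have "s \<in> {0..1}" by blast
      moreover have "s \<notin> {0<..<1}" using s eq[of s] by auto
      ultimately show "s \<in> {0,1}" by auto
    qed
  qed auto
  show "(LINT s:{0..1}|lebesgue. f s) = (LINT s:{0..1}|lebesgue. f' s)"
    unfolding set_lebesgue_integral_def
  proof (rule integral_discrete_difference[of "{0,1}"])
    show "emeasure lebesgue {x} = 0" for x::real by (simp add: emeasure_completion)
    show "indicat_real {0..1} x *\<^sub>R f x = indicat_real {0..1} x *\<^sub>R f' x" if "x \<notin> {0,1}" for x
      using eq[of x] that by (cases "x \<in> {0..1}") auto
  qed auto
qed

lemma schur_le_cong:
  assumes "\<And>s. s \<in> {0<..<1} \<Longrightarrow> f s = f' s" "\<And>s. s \<in> {0<..<1} \<Longrightarrow> g s = g' s"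
  shows "schur_le f g = schur_le f' g'"
  unfolding schur_le_def using schur_cong[OF assms(1)] schur_cong[OF assms(2)] by simp

lemma K_SI:
  assumes D: "SI_copula D" and v: "v \<in> {0..1}" and x: "x \<in> {0..1}"
  shows "(LINT s:{0..x}|lebesgue. drearr (\<lambda>u. partial1 D u v) s) = D x v"
proof -
  have cop: "copula D" using D by (simp add: SI_copula_def)
  have "(LINT s:{0..x}|lebesgue. drearr (deriv (\<lambda>u. D u v)) s) = D x v - D 0 v"
    by (rule K_int(2)) (use D v x copula_cont[OF cop v] copula_lip[OF cop v] in \<open>auto simp: SI_copula_def\<close>)
  moreover have "D 0 v = 0" using cop v by (simp add: copula_def)
  moreover have "(\<lambda>u. partial1 D u v) = deriv (\<lambda>u. D u v)" by (simp add: partial1_def[abs_def])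
  ultimately show ?thesis by simp
qed

lemma K_SD:
  assumes D: "SD_copula D" and v: "v \<in> {0..1}" and x: "x \<in> {0..1}"
  shows "(LINT s:{0..x}|lebesgue. drearr (\<lambda>u. partial1 D u v) s) = v - D (1 - x) v"
proof -
  have cop: "copula D" using D by (simp add: SD_copula_def)
  define g where "g y = D y v" for y
  define e where "e y = v - g (1 - y)" for y
  have cvx: "convex_on {0..1} g" using D v unfolding SD_copula_def g_def[abs_def] by simp
  have conc: "concave_on {0..1} e"
    unfolding concave_on_iff
  proof (intro conjI ballI allI impI)
    show "convex {0..1::real}" by simp
    fix a b :: real and s t :: real assume ab: "a \<in> {0..1}" "b \<in> {0..1}" and st: "0 \<le> s" "0 \<le> t" "s + t = 1"
    have "g (s *\<^sub>R (1 - a) + t *\<^sub>R (1 - b)) \<le> s * g (1 - a) + t * g (1 - b)"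
      using cvx ab st unfolding convex_on_def by auto
    moreover have "s *\<^sub>R (1 - a) + t *\<^sub>R (1 - b) = 1 - (s *\<^sub>R a + t *\<^sub>R b)"
      using st by (simp add: algebra_simps)
    moreover have "s * v + t * v = v" using st by (metis distrib_right mult_1)
    ultimately show "s * e a + t * e b \<le> e (s *\<^sub>R a + t *\<^sub>R b)"
      unfolding e_def by (simp add: algebra_simps)
  qed
  have econt: "continuous_on {0..1} e"
  proof -
    have gc: "continuous_on {0..1} g" using copula_cont[OF cop v] by (simp add: g_def[abs_def])
    have "continuous_on {0..1} (\<lambda>y. g (1 - y))"
      by (rule continuous_on_compose2[OF gc, of _ "\<lambda>y. 1 - y"]) (auto intro!: continuous_intros)
    then show ?thesis unfolding e_def by (intro continuous_intros)
  qed
  have elip: "e a \<le> e b \<and> e b - e a \<le> b - a" if "0 \<le> a" "a \<le> b" "b \<le> 1" for a b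
    using copula_lip[OF cop v, of "1 - b" "1 - a"] that by (auto simp: e_def g_def)
  obtain N where N: "countable N" "0 \<in> N" "1 \<in> N"
    "\<And>x. x \<in> {0<..<1} - N \<Longrightarrow> (e has_real_derivative deriv e x) (at x)"
    "\<And>x. x \<in> {0..1} - N \<Longrightarrow> 0 \<le> deriv e x \<and> deriv e x \<le> 1"
    "\<And>x z. x \<in> {0..1} - N \<Longrightarrow> z \<in> {0..1} - N \<Longrightarrow> x \<le> z \<Longrightarrow> deriv e z \<le> deriv e x"
    using concave_deriv_props[OF conc elip] by blast
  have dg: "deriv g y = deriv e (1 - y)" if y: "1 - y \<in> {0<..<1} - N" for y
  proof -
    have gy: "g z = v - e (1 - z)" for z by (simp add: e_def)
    have d1: "(e has_real_derivative deriv e (1 - y)) (at ((\<lambda>z. 1 - z) y))" using N(4)[OF y] by simp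
    have d2: "((\<lambda>z. 1 - z) has_real_derivative (-1)) (at y)" by (auto intro!: derivative_eq_intros)
    have "((\<lambda>z. e (1 - z)) has_real_derivative deriv e (1 - y) * (-1)) (at y)"
      using DERIV_chain2[OF d1 d2] by simp
    then have "((\<lambda>z. v - e (1 - z)) has_real_derivative (0 - deriv e (1 - y) * (-1))) (at y)"
      by (intro derivative_eq_intros) auto
    then have "(g has_real_derivative deriv e (1 - y)) (at y)" unfolding gy[abs_def] by simp
    then show ?thesis by (rule DERIV_imp_deriv)
  qed
  have drq: "drearr (deriv g) = drearr (deriv e)"
  proof (rule drearr_cong)
    fix t
    have "\<exists>c\<in>{0..1}. \<forall>s\<in>{0..1} - N - {c}. (t < deriv e s \<longleftrightarrow> s < c)"
      by (rule dist_thresh) (rule N(6))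
    then obtain c where c: "c \<in> {0..1}" "\<And>s. s \<in> {0..1} - N - {c} \<Longrightarrow> (t < deriv e s \<longleftrightarrow> s < c)"
      by blast
    have "measure lebesgue {s\<in>{0..1}. t < deriv e s} = measure lebesgue {0..<c}"
    proof (rule measure_ae_interval[of "N \<union> {c}"])
      show "countable (N \<union> {c})" using N(1) by simp
      show "{0..<c} \<in> lmeasurable" by (intro bounded_set_imp_lmeasurable) auto
      show "{0..<c} \<subseteq> {0..1}" using c(1) by auto
      fix s assume "s \<in> {0..1} - (N \<union> {c})"
      then show "t < deriv e s \<longleftrightarrow> s \<in> {0..<c}" using c(2)[of s] by auto
    qed
    moreover have "measure lebesgue {s\<in>{0..1}. t < deriv g s} = measure lebesgue {1-c<..1}"
    proof (rule measure_ae_interval[of "(\<lambda>r. 1 - r) ` (N \<union> {c})"])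
      show "countable ((\<lambda>r. 1 - r) ` (N \<union> {c}))" using N(1) by simp
      show "{1-c<..1} \<in> lmeasurable" by (intro bounded_set_imp_lmeasurable) auto
      show "{1-c<..1} \<subseteq> {0..1}" using c(1) by auto
      fix s assume s: "s \<in> {0..1} - (\<lambda>r. 1 - r) ` (N \<union> {c})"
      then have s': "1 - s \<notin> N" "1 - s \<noteq> c" "s \<in> {0..1}" by (auto simp: image_iff)
      have "s \<noteq> 1" using s'(1) N(2) by (metis diff_self)
      moreover have "s \<noteq> 0" using s'(1) N(3) by (metis diff_zero)
      ultimately have "1 - s \<in> {0<..<1} - N" using s' by auto
      then have "deriv g s = deriv e (1 - s)" by (intro dg)
      then show "t < deriv g s \<longleftrightarrow> s \<in> {1-c<..1}" using c(2)[of "1 - s"] s' by auto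
    qed
    moreover have "measure lebesgue {0..<c} = c" "measure lebesgue {1-c<..1} = c"
      using c(1) by (simp_all add: measure_completion)
    ultimately show "measure lebesgue {s\<in>{0..1}. t < deriv g s} = measure lebesgue {s\<in>{0..1}. t < deriv e s}"
      by simp
  qed
  have K: "(LINT s:{0..x}|lebesgue. drearr (deriv e) s) = e x - e 0"
    by (rule K_int(2)[OF conc econt elip x])
  have D1: "D 1 v = v" using cop v by (simp add: copula_def)
  have e0: "e 0 = 0" unfolding e_def g_def using D1 by simp
  have pd: "(\<lambda>u. partial1 D u v) = deriv g" by (simp add: partial1_def[abs_def] g_def[abs_def])
  have "(LINT s:{0..x}|lebesgue. drearr (\<lambda>u. partial1 D u v) s) = e x"
    unfolding pd drq K e0 by simp
  then show ?thesis by (simp add: e_def g_def)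
qed

context cp_setting
begin

interpretation prob_space M by (rule M)

lemma Cp_copula:
  assumes p: "p \<in> {0..1}"
  shows "copula (Cp M U V p)"
  unfolding copula_def
proof (intro conjI ballI impI)
  fix u v :: real assume "u \<in> {0..1}" "v \<in> {0..1}"
  show "Cp M U V p u v \<in> {0..1}" unfolding Cp_def using measure_nonneg prob_le_1 by auto
next
  fix t :: real assume t: "t \<in> {0..1}"
  have m: "min t (1-p) \<in> {0..1}" "min (2-p-t) 1 \<in> {0..1}" using p t by auto
  show "Cp M U V p t 0 = 0"
    using Cp_Phi[OF p t, of 0] C0[OF m(1)] C0[OF m(2)] by (simp add: Phi_def)
  have "min 0 (1-p) = 0" "min (2-p-0) 1 = 1" using p by auto
  then show "Cp M U V p 0 t = 0"
    using Cp_Phi[OF p _ t, of 0] C0[OF t] C1[OF t] by (simp add: Phi_def)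
  have "Cp M U V p t 1 = min t (1-p) + 1 - min (2-p-t) 1"
    using Cp_Phi[OF p t, of 1] C1[OF m(1)] C1[OF m(2)] by (simp add: Phi_def)
  also have "\<dots> = t" by (cases "t \<le> 1 - p") auto
  finally show "Cp M U V p t 1 = t" .
  have "min 1 (1-p) = 1 - p" "min (2-p-1) 1 = 1 - p" using p by auto
  then show "Cp M U V p 1 t = t"
    using Cp_Phi[OF p _ t, of 1] by (simp add: Phi_def)
next
  fix u1 u2 v1 v2 :: real assume "u1 \<in> {0..1}" "u2 \<in> {0..1}" "v1 \<in> {0..1}" "v2 \<in> {0..1}"
    and uv: "u1 \<le> u2" "v1 \<le> v2"
  define A where "A u v = {\<omega>\<in>space M. Tp p (U \<omega>) \<le> u \<and> V \<omega> \<le> v}" for u v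
  have [measurable]: "A u v \<in> sets M" for u v unfolding A_def by (rule Tp_meas)
  have int: "A u2 v1 \<inter> A u1 v2 = A u1 v1" using uv by (auto simp: A_def)
  have un: "measure M (A u2 v1 \<union> A u1 v2) = measure M (A u2 v1) + measure M (A u1 v2) - measure M (A u1 v1)"
    using measure_Un3[of "A u2 v1" M "A u1 v2"] int by (simp add: fmeasurable_def emeasure_eq_measure)
  have "measure M (A u2 v1 \<union> A u1 v2) \<le> measure M (A u2 v2)"
    by (rule finite_measure_mono) (use uv in \<open>auto simp: A_def\<close>)
  then show "Cp M U V p u2 v2 - Cp M U V p u2 v1 - Cp M U V p u1 v2 + Cp M U V p u1 v1 \<ge> 0"
    using un unfolding Cp_def A_def by linarith
qed

lemma d1S_Cp_v:
  assumes p: "p \<in> {0..1}" and v: "v \<in> {0..1}"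
  shows "drearr (\<lambda>u. partial1 (Cp M U V p) u v) = drearr (\<lambda>u. partial1 C u v)"
    "(LINT s:{0..1}|lebesgue. partial1 (Cp M U V p) s v) = (LINT s:{0..1}|lebesgue. partial1 C s v)"
proof -
  define h where "h x = C x v" for x
  define psi where "psi x = C (1-p) v + v - C (2-p-x) v" for x
  define F where "F x = Cp M U V p x v" for x
  note hp = hv_props[OF v]
  have conc: "concave_on {0..1} h" and hcont: "continuous_on {0..1} h"
    and lip: "\<And>x y. 0 \<le> x \<Longrightarrow> x \<le> y \<Longrightarrow> y \<le> 1 \<Longrightarrow> h x \<le> h y \<and> h y - h x \<le> y - x"
    using hp unfolding h_def[abs_def] by auto
  obtain N where N: "countable N" "0 \<in> N" "1 \<in> N"
    "\<And>x. x \<in> {0<..<1} - N \<Longrightarrow> (h has_real_derivative deriv h x) (at x)"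
    "\<And>x. x \<in> {0..1} - N \<Longrightarrow> 0 \<le> deriv h x \<and> deriv h x \<le> 1"
    "\<And>x z. x \<in> {0..1} - N \<Longrightarrow> z \<in> {0..1} - N \<Longrightarrow> x \<le> z \<Longrightarrow> deriv h z \<le> deriv h x"
    using concave_deriv_props[OF conc lip] by blast
  have pf: "(\<lambda>u. partial1 C u v) = deriv h" by (simp add: partial1_def[abs_def] h_def[abs_def])
  have pF: "(\<lambda>u. partial1 (Cp M U V p) u v) = deriv F" by (simp add: partial1_def[abs_def] F_def[abs_def])
  have L1: "deriv F s = deriv h s" if s: "s \<in> {0<..<1-p}" for s
  proof (rule deriv_local[of "{0<..<1-p}"])
    fix y assume y: "y \<in> {0<..<1-p}"
    then show "F y = h y" using Cp_Phi[OF p _ v, of y] Phi_low[OF p _ v, of y] p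
      by (auto simp: F_def h_def)
  qed (use s in auto)
  have L2: "deriv F s = deriv psi s" if s: "s \<in> {1-p<..<1}" for s
  proof (rule deriv_local[of "{1-p<..<1}"])
    fix y assume y: "y \<in> {1-p<..<1}"
    then show "F y = psi y" using Cp_Phi[OF p _ v, of y] Phi_high[OF p _ v, of y] p
      by (auto simp: F_def psi_def)
  qed (use s in auto)
  have L3: "(psi has_real_derivative deriv h (2-p-s)) (at s)" "deriv psi s = deriv h (2-p-s)"
    if s: "s \<in> {1-p<..<1}" "2-p-s \<notin> N" for s
  proof -
    have d1: "(h has_real_derivative deriv h (2-p-s)) (at ((\<lambda>z. 2-p-z) s))"
      using N(4)[of "2-p-s"] s p by auto
    have d2: "((\<lambda>z. 2-p-z) has_real_derivative (-1)) (at s)" by (auto intro!: derivative_eq_intros)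
    have "((\<lambda>z. h (2-p-z)) has_real_derivative deriv h (2-p-s) * (-1)) (at s)"
      using DERIV_chain2[OF d1 d2] by simp
    then have "((\<lambda>z. C (1-p) v + v - h (2-p-z)) has_real_derivative (0 - deriv h (2-p-s) * (-1))) (at s)"
      by (intro derivative_eq_intros) auto
    then show "(psi has_real_derivative deriv h (2-p-s)) (at s)"
      by (simp add: psi_def[abs_def] h_def)
    then show "deriv psi s = deriv h (2-p-s)" by (rule DERIV_imp_deriv)
  qed
  show "drearr (\<lambda>u. partial1 (Cp M U V p) u v) = drearr (\<lambda>u. partial1 C u v)"
    unfolding pf pF
  proof (rule drearr_cong)
    fix t
    have "\<exists>c\<in>{0..1}. \<forall>s\<in>{0..1} - N - {c}. (t < deriv h s \<longleftrightarrow> s < c)"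
      by (rule dist_thresh) (rule N(6))
    then obtain c where c: "c \<in> {0..1}" "\<And>s. s \<in> {0..1} - N - {c} \<Longrightarrow> (t < deriv h s \<longleftrightarrow> s < c)"
      by blast
    have mf: "measure lebesgue {s\<in>{0..1}. t < deriv h s} = c"
    proof -
      have "measure lebesgue {s\<in>{0..1}. t < deriv h s} = measure lebesgue {0..<c}"
      proof (rule measure_ae_interval[of "N \<union> {c}"])
        show "countable (N \<union> {c})" using N(1) by simp
        show "{0..<c} \<in> lmeasurable" by (intro bounded_set_imp_lmeasurable) auto
        show "{0..<c} \<subseteq> {0..1}" using c(1) by auto
        fix s assume "s \<in> {0..1} - (N \<union> {c})"
        then show "t < deriv h s \<longleftrightarrow> s \<in> {0..<c}" using c(2)[of s] by auto
      qed
      then show ?thesis using c(1) by (simp add: measure_completion)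
    qed
    define X where "X = N \<union> {c} \<union> {0, 1, 1-p} \<union> (\<lambda>r. 2-p-r) ` (N \<union> {c})"
    define I where "I = {s\<in>{0..1}. (s < 1-p \<and> s < c) \<or> (1-p < s \<and> 2-p-s < c)}"
    have X: "countable X" using N(1) by (simp add: X_def)
    have pt: "t < deriv F s \<longleftrightarrow> s \<in> I" if s: "s \<in> {0..1} - X" for s
    proof (cases "s < 1 - p")
      case True
      have "s \<in> {0<..<1-p}" using s True by (auto simp: X_def)
      then have "deriv F s = deriv h s" by (rule L1)
      moreover have "t < deriv h s \<longleftrightarrow> s < c" using s by (intro c(2)) (auto simp: X_def)
      ultimately show ?thesis using True s by (auto simp: I_def)
    next
      case False
      then have s1: "s \<in> {1-p<..<1}" using s by (auto simp: X_def)
      have s2: "2-p-s \<notin> N" "2-p-s \<noteq> c"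
      proof -
        show "2-p-s \<notin> N"
        proof
          assume "2-p-s \<in> N"
          then have "2-p-(2-p-s) \<in> (\<lambda>r. 2-p-r) ` (N \<union> {c})" by blast
          then show False using s by (simp add: X_def)
        qed
        show "2-p-s \<noteq> c"
        proof
          assume "2-p-s = c"
          then have "2-p-(2-p-s) \<in> (\<lambda>r. 2-p-r) ` (N \<union> {c})" by blast
          then show False using s by (simp add: X_def)
        qed
      qed
      have "deriv F s = deriv h (2-p-s)" using L2[OF s1] L3(2)[OF s1 s2(1)] by simp
      moreover have "t < deriv h (2-p-s) \<longleftrightarrow> 2-p-s < c" using s1 s2 p by (intro c(2)) auto
      ultimately show ?thesis using False s1 p by (auto simp: I_def)
    qed
    have mI: "I \<in> lmeasurable \<and> measure lebesgue I = c"
    proof (cases "c \<le> 1 - p")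
      case True
      have "I = {0..<c}" using True c(1) p by (auto simp: I_def)
      then show ?thesis using c(1) by (auto simp: measure_completion intro: bounded_set_imp_lmeasurable)
    next
      case False
      have eq: "I = {0..<1-p} \<union> {2-p-c<..1}" using False c(1) p by (auto simp: I_def)
      have l1: "{0..<1-p} \<in> lmeasurable" "{2-p-c<..1} \<in> lmeasurable"
        by (auto intro: bounded_set_imp_lmeasurable)
      have "measure lebesgue ({0..<1-p} \<union> {2-p-c<..1}) =
          measure lebesgue {0..<1-p} + measure lebesgue {2-p-c<..1} - measure lebesgue ({0..<1-p} \<inter> {2-p-c<..1})"
        using l1 by (intro measure_Un3) (auto simp: fmeasurable_def)
      also have "{0..<1-p} \<inter> {2-p-c<..1} = {}" using c(1) by auto
      also have "measure lebesgue {0..<1-p} = 1 - p" using p by (simp add: measure_completion)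
      also have "measure lebesgue {2-p-c<..1} = c - 1 + p" using False c(1) by (simp add: measure_completion)
      finally show ?thesis using eq l1 by auto
    qed
    have "measure lebesgue {s\<in>{0..1}. t < deriv F s} = measure lebesgue I"
      by (rule measure_ae_interval[OF X]) (use mI pt in \<open>auto simp: I_def\<close>)
    then show "measure lebesgue {s\<in>{0..1}. t < deriv F s} = measure lebesgue {s\<in>{0..1}. t < deriv h s}"
      using mI mf by simp
  qed
  have intf: "(LINT s:{0..1}|lebesgue. partial1 C s v) = v"
  proof -
    have "(LINT s:{0..1}|lebesgue. deriv h s) = h 1 - h 0" by (rule K_int(1)[OF conc hcont lip]) auto
    then show ?thesis using C0[OF v] C1[OF v] pf by (simp add: h_def)
  qed
  have ft1: "deriv h absolutely_integrable_on {0..1-p}" "integral {0..1-p} (deriv h) = h (1-p) - h 0"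
  proof -
    have c: "continuous_on {0..1-p} h" using p by (intro continuous_on_subset[OF hcont]) auto
    show "deriv h absolutely_integrable_on {0..1-p}" "integral {0..1-p} (deriv h) = h (1-p) - h 0"
      using ftc_ae[of 0 "1-p" h N] c p N(1) lip N(4) by auto
  qed
  have ft2: "deriv psi absolutely_integrable_on {1-p..1}" "integral {1-p..1} (deriv psi) = psi 1 - psi (1-p)"
  proof -
    have gc: "continuous_on {0..1} h" by (rule hcont)
    have "continuous_on {1-p..1} (\<lambda>y. h (2-p-y))"
      by (rule continuous_on_compose2[OF gc, of _ "\<lambda>y. 2-p-y"]) (use p in \<open>auto intro!: continuous_intros\<close>)
    then have c: "continuous_on {1-p..1} psi" unfolding psi_def h_def by (intro continuous_intros)
    have mono: "psi x \<le> psi y" if "1-p \<le> x" "x \<le> y" "y \<le> 1" for x y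
      using lip[of "2-p-y" "2-p-x"] that p by (auto simp: psi_def h_def)
    have der: "(psi has_real_derivative deriv psi x) (at x)" if "x \<in> {1-p<..<1} - (\<lambda>r. 2-p-r) ` N" for x
    proof -
      have "2-p-x \<notin> N"
      proof
        assume "2-p-x \<in> N"
        then have "2-p-(2-p-x) \<in> (\<lambda>r. 2-p-r) ` N" by blast
        then show False using that by simp
      qed
      then show ?thesis using L3[of x] that by auto
    qed
    show "deriv psi absolutely_integrable_on {1-p..1}" "integral {1-p..1} (deriv psi) = psi 1 - psi (1-p)"
      using ftc_ae[of "1-p" 1 psi "(\<lambda>r. 2-p-r) ` N"] c p N(1) mono der by auto
  qed
  have a1: "deriv F absolutely_integrable_on {0..1-p}" "integral {0..1-p} (deriv F) = h (1-p) - h 0"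
  proof -
    have e: "deriv F x = deriv h x" if "x \<in> {0..1-p} - {0, 1-p}" for x using L1[of x] that by auto
    show "deriv F absolutely_integrable_on {0..1-p}"
      by (rule absolutely_integrable_spike[OF ft1(1), of "{0,1-p}"]) (use e in auto)
    have "integral {0..1-p} (deriv h) = integral {0..1-p} (deriv F)"
      by (rule integral_spike[of "{0,1-p}"]) (use e in auto)
    then show "integral {0..1-p} (deriv F) = h (1-p) - h 0" using ft1(2) by simp
  qed
  have a2: "deriv F absolutely_integrable_on {1-p..1}" "integral {1-p..1} (deriv F) = psi 1 - psi (1-p)"
  proof -
    have e: "deriv F x = deriv psi x" if "x \<in> {1-p..1} - {1-p, 1}" for x using L2[of x] that by auto
    show "deriv F absolutely_integrable_on {1-p..1}"
      by (rule absolutely_integrable_spike[OF ft2(1), of "{1-p,1}"]) (use e in auto)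
    have "integral {1-p..1} (deriv psi) = integral {1-p..1} (deriv F)"
      by (rule integral_spike[of "{1-p,1}"]) (use e in auto)
    then show "integral {1-p..1} (deriv F) = psi 1 - psi (1-p)" using ft2(2) by simp
  qed
  have hi: "(deriv F has_integral ((h (1-p) - h 0) + (psi 1 - psi (1-p)))) {0..1}"
  proof (rule has_integral_combine[of 0 "1-p" 1])
    show "(deriv F has_integral h (1 - p) - h 0) {0..1 - p}"
      using a1 set_lebesgue_integral_eq_integral(1)[OF a1(1)] by (metis integrable_integral)
    show "(deriv F has_integral psi 1 - psi (1 - p)) {1 - p..1}"
      using a2 set_lebesgue_integral_eq_integral(1)[OF a2(1)] by (metis integrable_integral)
  qed (use p in auto)
  have ai: "deriv F absolutely_integrable_on {0..1}"
  proof -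
    have "{0..1-p} \<union> {1-p..1} = {0..1::real}" using p by auto
    then show ?thesis using absolutely_integrable_Un[OF a1(1) a2(1)] by simp
  qed
  have val: "(h (1-p) - h 0) + (psi 1 - psi (1-p)) = v"
    using C0[OF v] C1[OF v] p by (simp add: h_def psi_def)
  have "(LINT s:{0..1}|lebesgue. deriv F s) = v"
    using set_lebesgue_integral_eq_integral(2)[OF ai] integral_unique[OF hi] val by simp
  then show "(LINT s:{0..1}|lebesgue. partial1 (Cp M U V p) s v) = (LINT s:{0..1}|lebesgue. partial1 C s v)"
    using intf pF by (simp add: partial1_def F_def[abs_def])
qed

lemma d1S_Cp:
  assumes p: "p \<in> {0..1}"
  shows "d1S_eq (Cp M U V p) C"
  unfolding d1S_eq_def d1S_le_def schur_le_def using d1S_Cp_v[OF p] by simp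

end

lemma convex_on_cong':
  assumes "convex_on S f" "\<And>x. x \<in> S \<Longrightarrow> f x = g x"
  shows "convex_on S g"
  unfolding convex_on_def
proof (intro conjI ballI allI impI)
  have c: "convex S" using assms(1) by (simp add: convex_on_def)
  then show "convex S" .
  fix x y :: 'a and u v :: real assume xy: "x \<in> S" "y \<in> S" and uv: "0 \<le> u" "0 \<le> v" "u + v = 1"
  have m: "u *\<^sub>R x + v *\<^sub>R y \<in> S" using convexD[OF c xy uv] .
  have "f (u *\<^sub>R x + v *\<^sub>R y) \<le> u * f x + v * f y" using assms(1) xy uv unfolding convex_on_def by blast
  then show "g (u *\<^sub>R x + v *\<^sub>R y) \<le> u * g x + v * g y" using assms(2)[OF m] assms(2)[OF xy(1)] assms(2)[OF xy(2)] by simp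
qed

lemma concave_on_cong':
  assumes "concave_on S f" "\<And>x. x \<in> S \<Longrightarrow> f x = g x"
  shows "concave_on S g"
proof -
  have "convex_on S (\<lambda>x. - f x)" using assms(1) by (simp add: concave_on_def)
  then have "convex_on S (\<lambda>x. - g x)" by (rule convex_on_cong') (simp add: assms(2))
  then show ?thesis by (simp add: concave_on_def)
qed

lemma copula_cong:
  assumes "copula D" "\<And>u v. u \<in> {0..1} \<Longrightarrow> v \<in> {0..1} \<Longrightarrow> D u v = E u v"
  shows "copula E"
  using assms unfolding copula_def by simp

lemma partial1_cong:
  assumes "\<And>u. u \<in> {0<..<1} \<Longrightarrow> D u v = E u v" "s \<in> {0<..<1}"
  shows "partial1 D s v = partial1 E s v"
  unfolding partial1_def by (rule deriv_local[of "{0<..<1}"]) (use assms in auto)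

lemma d1S_eq_cong:
  assumes "d1S_eq D C" "\<And>u v. u \<in> {0<..<1} \<Longrightarrow> v \<in> {0..1} \<Longrightarrow> D u v = E u v"
  shows "d1S_eq E C"
proof -
  have "schur_le (\<lambda>u. partial1 D u v) (\<lambda>u. partial1 C u v) = schur_le (\<lambda>u. partial1 E u v) (\<lambda>u. partial1 C u v)"
    "schur_le (\<lambda>u. partial1 C u v) (\<lambda>u. partial1 D u v) = schur_le (\<lambda>u. partial1 C u v) (\<lambda>u. partial1 E u v)"
    if v: "v \<in> {0..1}" for v
    by (rule schur_le_cong; rule partial1_cong; use assms(2) v in auto)+
  then show ?thesis using assms(1) unfolding d1S_eq_def d1S_le_def by auto
qed

lemma schur_le_refl: "schur_le f f" unfolding schur_le_def by simp

context cp_setting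
begin

definition Cn where "Cn u v = (if (u, v) \<in> unit_sq then C u v else 0)"
definition Dn where "Dn u v = (if (u, v) \<in> unit_sq then Cp M U V 1 u v else 0)"

lemma Cn_sq: "u \<in> {0..1} \<Longrightarrow> v \<in> {0..1} \<Longrightarrow> Cn u v = C u v"
  by (simp add: Cn_def unit_sq_def)
lemma Dn_sq: "u \<in> {0..1} \<Longrightarrow> v \<in> {0..1} \<Longrightarrow> Dn u v = Cp M U V 1 u v"
  by (simp add: Dn_def unit_sq_def)

lemma Dn_formula: "u \<in> {0..1} \<Longrightarrow> v \<in> {0..1} \<Longrightarrow> Dn u v = v - C (1 - u) v"
  using Dn_sq Cp_Phi[of 1 u v] C0[of v] by (simp add: Phi_def)

lemma C_up_eq: "C_up C = Cn"
  unfolding C_up_def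
proof (rule the_equality)
  show "SI_copula Cn \<and> d1S_eq Cn C \<and> (\<forall>u v. (u, v) \<notin> unit_sq \<longrightarrow> Cn u v = 0)"
  proof (intro conjI allI impI)
    show "SI_copula Cn" unfolding SI_copula_def
    proof (intro conjI ballI)
      show "copula Cn" by (rule copula_cong[OF cop]) (simp add: Cn_sq)
      fix v :: real assume v: "v \<in> {0..1}"
      show "concave_on {0..1} (\<lambda>u. Cn u v)"
        by (rule concave_on_cong'[OF hv_props(1)[OF v]]) (metis Cn_sq v)
    qed
    have "d1S_eq C C" unfolding d1S_eq_def d1S_le_def by (simp add: schur_le_refl)
    then show "d1S_eq Cn C" by (rule d1S_eq_cong) (simp add: Cn_sq)
    fix u v assume "(u, v) \<notin> unit_sq" then show "Cn u v = 0" by (simp add: Cn_def)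
  qed
next
  fix D assume D: "SI_copula D \<and> d1S_eq D C \<and> (\<forall>u v. (u, v) \<notin> unit_sq \<longrightarrow> D u v = 0)"
  have copD: "copula D" using D by (simp add: SI_copula_def)
  show "D = Cn"
  proof (intro ext)
    fix u v
    show "D u v = Cn u v"
    proof (cases "(u, v) \<in> unit_sq")
      case False then show ?thesis using D by (simp add: Cn_def)
    next
      case True
      then have u: "u \<in> {0..1}" and v: "v \<in> {0..1}" by (auto simp: unit_sq_def)
      consider "u = 0" | "u = 1" | "u \<in> {0<..<1}" using u by fastforce
      then show ?thesis
      proof cases
        case 1 then show ?thesis using copD cop v Cn_sq[OF u v] by (simp add: copula_def)
      next
        case 2 then show ?thesis using copD cop v Cn_sq[OF u v] by (simp add: copula_def)
      next
        case 3
        have s1: "schur_le (\<lambda>s. partial1 D s v) (\<lambda>s. partial1 C s v)"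
          and s2: "schur_le (\<lambda>s. partial1 C s v) (\<lambda>s. partial1 D s v)"
          using D v unfolding d1S_eq_def d1S_le_def by auto
        have i1: "(LINT s:{0..u}|lebesgue. drearr (\<lambda>s. partial1 D s v) s) \<le> (LINT s:{0..u}|lebesgue. drearr (\<lambda>s. partial1 C s v) s)"
          using s1 3 unfolding schur_le_def by blast
        have i2: "(LINT s:{0..u}|lebesgue. drearr (\<lambda>s. partial1 C s v) s) \<le> (LINT s:{0..u}|lebesgue. drearr (\<lambda>s. partial1 D s v) s)"
          using s2 3 unfolding schur_le_def by blast
        have kD: "(LINT s:{0..u}|lebesgue. drearr (\<lambda>s. partial1 D s v) s) = D u v"
          using K_SI[of D v u] D u v by blast
        have kC: "(LINT s:{0..u}|lebesgue. drearr (\<lambda>s. partial1 C s v) s) = C u v"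
          using K_SI[OF SI v u] .
        have "D u v \<le> C u v" "C u v \<le> D u v" using i1 i2 kD kC by linarith+
        then show ?thesis using Cn_sq[OF u v] by simp
      qed
    qed
  qed
qed

lemma C_down_eq: "C_down C = Dn"
  unfolding C_down_def
proof (rule the_equality)
  show "SD_copula Dn \<and> d1S_eq Dn C \<and> (\<forall>u v. (u, v) \<notin> unit_sq \<longrightarrow> Dn u v = 0)"
  proof (intro conjI allI impI)
    show "SD_copula Dn" unfolding SD_copula_def
    proof (intro conjI ballI)
      show "copula Dn" by (rule copula_cong[OF Cp_copula[of 1]]) (simp_all add: Dn_sq)
      fix v :: real assume v: "v \<in> {0..1}"
      have cv: "convex_on {0..1} (\<lambda>u. v - C (1 - u) v)"
        unfolding convex_on_def
      proof (intro conjI ballI allI impI)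
        show "convex {0..1::real}" by simp
        fix a b :: real and s t :: real assume ab: "a \<in> {0..1}" "b \<in> {0..1}" and st: "0 \<le> s" "0 \<le> t" "s + t = 1"
        have "C (s *\<^sub>R (1 - a) + t *\<^sub>R (1 - b)) v \<ge> s * C (1 - a) v + t * C (1 - b) v"
          using hv_props(1)[OF v] ab st unfolding concave_on_iff by auto
        moreover have "s *\<^sub>R (1 - a) + t *\<^sub>R (1 - b) = 1 - (s *\<^sub>R a + t *\<^sub>R b)"
          using st by (simp add: algebra_simps)
        moreover have "s * v + t * v = v" using st by (metis distrib_right mult_1)
        ultimately show "v - C (1 - (s *\<^sub>R a + t *\<^sub>R b)) v \<le> s * (v - C (1 - a) v) + t * (v - C (1 - b) v)"
          by (simp add: algebra_simps)
      qed
      show "convex_on {0..1} (\<lambda>u. Dn u v)"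
        by (rule convex_on_cong'[OF cv]) (metis Dn_formula v)
    qed
    show "d1S_eq Dn C" by (rule d1S_eq_cong[OF d1S_Cp[of 1]]) (simp_all add: Dn_sq)
    fix u v assume "(u, v) \<notin> unit_sq" then show "Dn u v = 0" by (simp add: Dn_def)
  qed
next
  fix D assume D: "SD_copula D \<and> d1S_eq D C \<and> (\<forall>u v. (u, v) \<notin> unit_sq \<longrightarrow> D u v = 0)"
  have copD: "copula D" using D by (simp add: SD_copula_def)
  show "D = Dn"
  proof (intro ext)
    fix u v
    show "D u v = Dn u v"
    proof (cases "(u, v) \<in> unit_sq")
      case False then show ?thesis using D by (simp add: Dn_def)
    next
      case True
      then have u: "u \<in> {0..1}" and v: "v \<in> {0..1}" by (auto simp: unit_sq_def)
      consider "u = 0" | "u = 1" | "u \<in> {0<..<1}" using u by fastforce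
      then show ?thesis
      proof cases
        case 1 then show ?thesis using copD cop v Dn_formula[OF u v] by (simp add: copula_def)
      next
        case 2 then show ?thesis using copD cop v Dn_formula[OF u v] by (simp add: copula_def)
      next
        case 3
        have s1: "schur_le (\<lambda>s. partial1 D s v) (\<lambda>s. partial1 C s v)"
          and s2: "schur_le (\<lambda>s. partial1 C s v) (\<lambda>s. partial1 D s v)"
          using D v unfolding d1S_eq_def d1S_le_def by auto
        have x: "1 - u \<in> {0<..<1}" "1 - u \<in> {0..1}" using 3 by auto
        have i1: "(LINT s:{0..1-u}|lebesgue. drearr (\<lambda>s. partial1 D s v) s) \<le> (LINT s:{0..1-u}|lebesgue. drearr (\<lambda>s. partial1 C s v) s)"
          using s1 x unfolding schur_le_def by blast
        have i2: "(LINT s:{0..1-u}|lebesgue. drearr (\<lambda>s. partial1 C s v) s) \<le> (LINT s:{0..1-u}|lebesgue. drearr (\<lambda>s. partial1 D s v) s)"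
          using s2 x unfolding schur_le_def by blast
        have kD: "(LINT s:{0..1-u}|lebesgue. drearr (\<lambda>s. partial1 D s v) s) = v - D (1 - (1 - u)) v"
          using K_SD[of D v "1 - u"] D v x by blast
        have kC: "(LINT s:{0..1-u}|lebesgue. drearr (\<lambda>s. partial1 C s v) s) = C (1 - u) v"
          using K_SI[OF SI v x(2)] .
        have "v - D u v \<le> C (1 - u) v" "C (1 - u) v \<le> v - D u v" using i1 i2 kD kC by simp_all
        then show ?thesis using Dn_formula[OF u v] by simp
      qed
    qed
  qed
qed

end

theorem lemma4p1:
  fixes M :: "'a measure" and U V :: "'a \<Rightarrow> real" and C :: "real \<Rightarrow> real \<Rightarrow> real"
  assumes SI: "SI_copula C"
    and M: "prob_space M"
    and U: "U \<in> borel_measurable M" and V: "V \<in> borel_measurable M"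
    and dist: "\<forall>u\<in>{0..1}. \<forall>v\<in>{0..1}.
                 measure M {\<omega>\<in>space M. U \<omega> \<le> u \<and> V \<omega> \<le> v} = C u v"
  shows "(\<forall>p\<in>{0..1}. copula (Cp M U V p))
    \<and> (\<forall>u\<in>{0..1}. \<forall>v\<in>{0..1}. Cp M U V 0 u v = C u v \<and> C u v = C_up C u v)
    \<and> (\<forall>u\<in>{0..1}. \<forall>v\<in>{0..1}. Cp M U V 1 u v = C_down C u v)
    \<and> (\<forall>p\<in>{0..1}. d1S_eq (Cp M U V p) C)
    \<and> (\<forall>p p'. 0 \<le> p \<longrightarrow> p \<le> p' \<longrightarrow> p' \<le> 1 \<longrightarrow>
          (\<forall>u\<in>{0..1}. \<forall>v\<in>{0..1}. Cp M U V p u v \<ge> Cp M U V p' u v))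
    \<and> (\<forall>u\<in>{0..1}. \<forall>v\<in>{0..1}. continuous_on {0..1} (\<lambda>p. Cp M U V p u v))"
proof -
  have cs: "cp_setting M U V C" unfolding cp_setting_def using SI M U V dist by blast
  interpret S: cp_setting M U V C by (rule cs)
  have zero01: "(0::real) \<in> {0..1}" "(1::real) \<in> {0..1}" by auto
  show ?thesis
  proof (intro conjI ballI allI impI)
    show "copula (Cp M U V p)" if "p \<in> {0..1}" for p using S.Cp_copula[OF that] .
    fix u v :: real assume u: "u \<in> {0..1}" and v: "v \<in> {0..1}"
    show "Cp M U V 0 u v = C u v"
      using S.Cp_Phi[OF zero01(1) u v] S.Phi_low[OF zero01(1) u v] u by simp
    show "C u v = C_up C u v" using S.C_up_eq S.Cn_sq[OF u v] by simp
    show "Cp M U V 1 u v = C_down C u v" using S.C_down_eq S.Dn_sq[OF u v] by simp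
    show "continuous_on {0..1} (\<lambda>p. Cp M U V p u v)"
    proof -
      have "continuous_on {0..1} (\<lambda>p. Phi C p u v)" by (rule S.Phi_cont[OF u v])
      then show ?thesis
        by (rule continuous_on_cong[THEN iffD1, rotated 2]) (use S.Cp_Phi[OF _ u v] in auto)
    qed
  next
    show "d1S_eq (Cp M U V p) C" if "p \<in> {0..1}" for p using S.d1S_Cp[OF that] .
  next
    fix p p' u v :: real assume pp: "0 \<le> p" "p \<le> p'" "p' \<le> 1" and u: "u \<in> {0..1}" and v: "v \<in> {0..1}"
    have "p \<in> {0..1}" "p' \<in> {0..1}" using pp by auto
    then show "Cp M U V p' u v \<le> Cp M U V p u v"
      using S.Cp_Phi[of p u v] S.Cp_Phi[of p' u v] S.Phi_mono[OF pp u v] u v by simp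
  qed
qed

end
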